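(* Let $(A,\diamond,\alpha)$ be a Hom-zinbiel algebra and let $(\prec_i,\succ_i)_{i\ge0}$ be a Hom-dendriform formal deformation of $A$. Define $x*y=x\succ_1 y-y\prec_1 x$ for $x,y\in A$. Then $(A,\diamond,*,\alpha)$ is a Hom-pre-Poisson algebra.
   Context: A Hom-zinbiel algebra $(A,\diamond,\alpha)$: bilinear $\diamond$, linear $\alpha$ with $\alpha(x\diamond y)=\alpha(x)\diamond\alpha(y)$ and $\alpha(x)\diamond(y\diamond z)=(x\diamond y)\diamond\alpha(z)+(y\diamond x)\diamond\alpha(z)$. A Hom-dendriform algebra $(D,\prec,\succ,\alpha)$: bilinear $\prec,\succ$ and linear $\alpha$ which is a morphism for both products, such that $(x\prec y)\prec\alpha(z)=\alpha(x)\prec(y\prec z+y\succ z)$, $(x\succ y)\prec\alpha(z)=\alpha(x)\succ(y\prec z)$, $\alpha(x)\succ(y\succ z)=(x\prec y+x\succ y)\succ\alpha(z)$. A Hom-dendriform formal deformation of $(A,\diamond,\alpha)$ is a sequence of bilinear maps $\prec_i,\succ_i:A\otimes A\to A$ ($i\ge0$) with $x\succ_0 y=y\prec_0 x=x\diamond y$, such that the $\mathbb{K}[[t]]$-bilinear products $x\prec_t y=\sum_{i\ge0}(x\prec_i y)t^i$, $x\succ_t y=\sum_{i\ge0}(x\succ_i y)t^i$ on $A[[t]]$, together with the $t$-linear extension of $\alpha$, form a Hom-dendriform algebra $(A[[t]],\prec_t,\succ_t,\alpha)$. A Hom-pre-Lie algebra $(A,*,\alpha)$: $\alpha(x*y)=\alpha(x)*\alpha(y)$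 and $(x*y)*\alpha(z)-\alpha(x)*(y*z)=(y*x)*\alpha(z)-\alpha(y)*(x*z)$. A Hom-pre-Poisson algebra $(A,\diamond,*,\alpha)$: $(A,\diamond,\alpha)$ Hom-zinbiel, $(A,*,\alpha)$ Hom-pre-Lie, and $(x*y-y*x)\diamond\alpha(z)=\alpha(x)*(y\diamond z)-\alpha(y)\diamond(x*z)$, $(x\diamond y+y\diamond x)*\alpha(z)=\alpha(x)\diamond(y*z)+\alpha(y)\diamond(x*z)$ for all $x,y,z$. *)

theory Defs
  imports Complex_Main
begin

text \<open>Ground field 'k, algebra A = type 'a, a 'k-vector space via scale.\<close>

definition bilin :: "('k::field \<Rightarrow> 'a::ab_group_add \<Rightarrow> 'a) \<Rightarrow> ('a \<Rightarrow> 'a \<Rightarrow> 'a) \<Rightarrow> bool" where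
  "bilin s m \<longleftrightarrow> (\<forall>x. Vector_Spaces.linear s s (m x)) \<and> (\<forall>y. Vector_Spaces.linear s s (\<lambda>x. m x y))"

definition hom_zinbiel :: "('k::field \<Rightarrow> 'a::ab_group_add \<Rightarrow> 'a) \<Rightarrow> ('a \<Rightarrow> 'a \<Rightarrow> 'a) \<Rightarrow> ('a \<Rightarrow> 'a) \<Rightarrow> bool" where
  "hom_zinbiel s m \<alpha> \<longleftrightarrow> bilin s m \<and> Vector_Spaces.linear s s \<alpha> \<and>
     (\<forall>x y. \<alpha> (m x y) = m (\<alpha> x) (\<alpha> y)) \<and>
     (\<forall>x y z. m (\<alpha> x) (m y z) = m (m x y) (\<alpha> z) + m (m y x) (\<alpha> z))"

definition hom_dendriform_axioms :: "('b \<Rightarrow> 'b \<Rightarrow> 'b) \<Rightarrow> ('b \<Rightarrow> 'b \<Rightarrow> 'b) \<Rightarrow> ('b \<Rightarrow> 'b \<Rightarrow> 'b) \<Rightarrow> ('b \<Rightarrow> 'b) \<Rightarrow> bool" where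
  "hom_dendriform_axioms add l r \<alpha> \<longleftrightarrow>
     (\<forall>x y. \<alpha> (l x y) = l (\<alpha> x) (\<alpha> y)) \<and> (\<forall>x y. \<alpha> (r x y) = r (\<alpha> x) (\<alpha> y)) \<and>
     (\<forall>x y z. l (l x y) (\<alpha> z) = l (\<alpha> x) (add (l y z) (r y z))) \<and>
     (\<forall>x y z. l (r x y) (\<alpha> z) = r (\<alpha> x) (l y z)) \<and>
     (\<forall>x y z. r (\<alpha> x) (r y z) = r (add (l x y) (r x y)) (\<alpha> z))"

text \<open>A[[t]] is represented as nat \<Rightarrow> 'a (coefficient sequences). The K[[t]]-bilinear extension
  of x \<cdot>_t y = \<Sum>_i (x \<cdot>_i y) t^i to A[[t]]: the n-th coefficient of f \<cdot>_t g is
  \<Sum>_{i+j+k=n} f_j \<cdot>_i g_k.\<close>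
definition ser_prod :: "(nat \<Rightarrow> 'a \<Rightarrow> 'a \<Rightarrow> 'a::comm_monoid_add) \<Rightarrow> (nat \<Rightarrow> 'a) \<Rightarrow> (nat \<Rightarrow> 'a) \<Rightarrow> (nat \<Rightarrow> 'a)" where
  "ser_prod p f g = (\<lambda>n. \<Sum>i\<le>n. \<Sum>j\<le>n - i. p i (f j) (g (n - i - j)))"

definition ser_map :: "('a \<Rightarrow> 'a) \<Rightarrow> (nat \<Rightarrow> 'a) \<Rightarrow> (nat \<Rightarrow> 'a)" where
  "ser_map \<alpha> f = (\<lambda>n. \<alpha> (f n))"

definition hom_dendriform_deformation ::
  "('k::field \<Rightarrow> 'a::ab_group_add \<Rightarrow> 'a) \<Rightarrow> ('a \<Rightarrow> 'a \<Rightarrow> 'a) \<Rightarrow> ('a \<Rightarrow> 'a)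
   \<Rightarrow> (nat \<Rightarrow> 'a \<Rightarrow> 'a \<Rightarrow> 'a) \<Rightarrow> (nat \<Rightarrow> 'a \<Rightarrow> 'a \<Rightarrow> 'a) \<Rightarrow> bool" where
  "hom_dendriform_deformation s m \<alpha> prec succ \<longleftrightarrow>
     (\<forall>i. bilin s (prec i) \<and> bilin s (succ i)) \<and>
     (\<forall>x y. succ 0 x y = m x y \<and> prec 0 y x = m x y) \<and>
     hom_dendriform_axioms (\<lambda>f g n. f n + g n) (ser_prod prec) (ser_prod succ) (ser_map \<alpha>)"

definition hom_pre_lie :: "('k::field \<Rightarrow> 'a::ab_group_add \<Rightarrow> 'a) \<Rightarrow> ('a \<Rightarrow> 'a \<Rightarrow> 'a) \<Rightarrow> ('a \<Rightarrow> 'a) \<Rightarrow> bool" where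
  "hom_pre_lie s p \<alpha> \<longleftrightarrow> bilin s p \<and> Vector_Spaces.linear s s \<alpha> \<and>
     (\<forall>x y. \<alpha> (p x y) = p (\<alpha> x) (\<alpha> y)) \<and>
     (\<forall>x y z. p (p x y) (\<alpha> z) - p (\<alpha> x) (p y z) = p (p y x) (\<alpha> z) - p (\<alpha> y) (p x z))"

definition hom_pre_poisson :: "('k::field \<Rightarrow> 'a::ab_group_add \<Rightarrow> 'a) \<Rightarrow> ('a \<Rightarrow> 'a \<Rightarrow> 'a) \<Rightarrow> ('a \<Rightarrow> 'a \<Rightarrow> 'a) \<Rightarrow> ('a \<Rightarrow> 'a) \<Rightarrow> bool" where
  "hom_pre_poisson s m p \<alpha> \<longleftrightarrow> hom_zinbiel s m \<alpha> \<and> hom_pre_lie s p \<alpha> \<and>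
     (\<forall>x y z. m (p x y - p y x) (\<alpha> z) = p (\<alpha> x) (m y z) - m (\<alpha> y) (p x z)) \<and>
     (\<forall>x y z. p (m x y + m y x) (\<alpha> z) = m (\<alpha> x) (p y z) + m (\<alpha> y) (p x z))"

end

theory Submission
  imports Defs
begin

lemma additive_facts:
  fixes f :: "'c::ab_group_add \<Rightarrow> 'b::ab_group_add"
  assumes "\<forall>x y. f (x + y) = f x + f y"
  shows "f (a + b) = f a + f b" "f 0 = 0" "f (a - b) = f a - f b" "f (- a) = - f a"
proof -
  have a: "\<And>x y. f (x + y) = f x + f y" using assms by blast
  have "f 0 = f 0 + f 0" using a[of 0 0] by (simp only: add_0_left)
  then show z: "f 0 = 0" by (simp only: add_cancel_right_right)
  have n: "f (- c) = - f c" for c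
  proof -
    have "f c + f (- c) = 0" using a[of c "-c"] z by simp
    from minus_unique[OF this] show ?thesis by simp
  qed
  show "f (- a) = - f a" by (rule n)
  show "f (a + b) = f a + f b" by (rule a)
  show "f (a - b) = f a - f b" using a[of a "-b"] n[of b] by simp
qed

lemma lin_add: "Vector_Spaces.linear s s f \<Longrightarrow> \<forall>x y. f (x + y) = f x + f y"
  by (simp add: module_hom_iff_linear[symmetric] module_hom_iff)

lemma bilin_rules:
  assumes "bilin s p"
  shows "p x (a + b) = p x a + p x b" "p x 0 = 0" "p x (a - b) = p x a - p x b" "p x (- a) = - p x a"
    "p (a + b) y = p a y + p b y" "p 0 y = 0" "p (a - b) y = p a y - p b y" "p (- a) y = - p a y"
proof -
  have 1: "\<forall>u v. p x (u + v) = p x u + p x v" using assms lin_add unfolding bilin_def by blast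
  have 2: "\<forall>u v. p (u + v) y = p u y + p v y" using assms lin_add[of s "\<lambda>u. p u y"] unfolding bilin_def by blast
  show "p x (a + b) = p x a + p x b" "p x 0 = 0" "p x (a - b) = p x a - p x b" "p x (- a) = - p x a"
    using additive_facts[OF 1] by auto
  show "p (a + b) y = p a y + p b y" "p 0 y = 0" "p (a - b) y = p a y - p b y" "p (- a) y = - p a y"
    using additive_facts[OF 2, simplified] by auto
qed

definition dl :: "'a \<Rightarrow> nat \<Rightarrow> 'a::zero" where "dl x = (\<lambda>n. if n = 0 then x else 0)"

lemma ser_prod_dr:
  assumes "\<And>i u. p i u 0 = 0"
  shows "ser_prod p f (dl w) n = (\<Sum>i\<le>n. p i (f (n - i)) w)"
proof -
  have "\<And>i. i \<le> n \<Longrightarrow> (\<Sum>j\<le>n - i. p i (f j) (dl w (n - i - j))) = p i (f (n - i)) w"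
  proof -
    fix i assume "i \<le> n"
    have "(\<Sum>j\<le>n - i. p i (f j) (dl w (n - i - j))) = (\<Sum>j\<le>n - i. if j = n - i then p i (f j) w else 0)"
      by (rule sum.cong) (auto simp: dl_def assms)
    also have "\<dots> = p i (f (n - i)) w" by (simp add: sum.delta)
    finally show "(\<Sum>j\<le>n - i. p i (f j) (dl w (n - i - j))) = p i (f (n - i)) w" .
  qed
  thus ?thesis unfolding ser_prod_def by (auto intro: sum.cong)
qed

lemma ser_prod_dl:
  assumes "\<And>i u. p i 0 u = 0"
  shows "ser_prod p (dl w) g n = (\<Sum>i\<le>n. p i w (g (n - i)))"
proof -
  have "\<And>i. i \<le> n \<Longrightarrow> (\<Sum>j\<le>n - i. p i (dl w j) (g (n - i - j))) = p i w (g (n - i))"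
  proof -
    fix i assume "i \<le> n"
    have "(\<Sum>j\<le>n - i. p i (dl w j) (g (n - i - j))) = (\<Sum>j\<le>n - i. if j = 0 then p i w (g (n - i - j)) else 0)"
      by (rule sum.cong) (auto simp: dl_def assms)
    also have "\<dots> = p i w (g (n - i))" by (simp add: sum.delta)
    finally show "(\<Sum>j\<le>n - i. p i (dl w j) (g (n - i - j))) = p i w (g (n - i))" .
  qed
  thus ?thesis unfolding ser_prod_def by (auto intro: sum.cong)
qed

lemma ser_prod_dd:
  assumes "\<And>i u. p i 0 u = 0" "\<And>i u. p i u 0 = 0"
  shows "ser_prod p (dl x) (dl y) = (\<lambda>n. p n x y)"
proof
  fix n
  have "ser_prod p (dl x) (dl y) n = (\<Sum>i\<le>n. p i x (dl y (n - i)))" by (rule ser_prod_dl[of p, OF assms(1)])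
  also have "\<dots> = (\<Sum>i\<le>n. if i = n then p i x y else 0)"
    by (rule sum.cong) (auto simp: dl_def assms(2))
  also have "\<dots> = p n x y" by simp
  finally show "ser_prod p (dl x) (dl y) n = p n x y" .
qed

lemma sum2: "(\<Sum>i\<le>2::nat. f i) = f 0 + f 1 + (f 2 :: 'a::comm_monoid_add)"
  by (simp add: eval_nat_numeral atMost_Suc add_ac)
lemma sum1: "(\<Sum>i\<le>1::nat. f i) = f 0 + (f 1 :: 'a::comm_monoid_add)"
  by (simp add: atMost_Suc add_ac)

lemma linear_diff_fun:
  assumes "vector_space s" "Vector_Spaces.linear s s f" "Vector_Spaces.linear s s g"
  shows "Vector_Spaces.linear s s (\<lambda>x. f x - g x)"
proof -
  have mp: "module_pair s s" using assms(1) by (simp add: module_pair_def vector_space_def module_def)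
  show ?thesis using module_pair.module_hom_sub[OF mp] assms(2,3)
    by (simp add: module_hom_iff_linear)
qed

theorem theorem4p2:
  fixes s :: "'k::field \<Rightarrow> 'a::ab_group_add \<Rightarrow> 'a"
    and m :: "'a \<Rightarrow> 'a \<Rightarrow> 'a" and \<alpha> :: "'a \<Rightarrow> 'a"
    and prec succ :: "nat \<Rightarrow> 'a \<Rightarrow> 'a \<Rightarrow> 'a"
  assumes "vector_space s"
    and "hom_zinbiel s m \<alpha>"
    and "hom_dendriform_deformation s m \<alpha> prec succ"
  shows "hom_pre_poisson s m (\<lambda>x y. succ 1 x y - prec 1 y x) \<alpha>"
proof -
  define P where "P = (\<lambda>x y. succ 1 x y - prec 1 y x)"
  have Z: "hom_zinbiel s m \<alpha>" by fact
  have linA: "Vector_Spaces.linear s s \<alpha>" using Z unfolding hom_zinbiel_def by blast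
  have bm: "bilin s m" using Z unfolding hom_zinbiel_def by blast
  have bp: "\<And>i. bilin s (prec i)" using assms(3) unfolding hom_dendriform_deformation_def by blast
  have bs: "\<And>i. bilin s (succ i)" using assms(3) unfolding hom_dendriform_deformation_def by blast
  have s0: "\<And>x y. succ 0 x y = m x y" using assms(3) unfolding hom_dendriform_deformation_def by blast
  have p0: "\<And>x y. prec 0 x y = m y x" using assms(3) unfolding hom_dendriform_deformation_def by blast
  have H: "hom_dendriform_axioms (\<lambda>f g n. f n + g n) (ser_prod prec) (ser_prod succ) (ser_map \<alpha>)"
    using assms(3) unfolding hom_dendriform_deformation_def by blast
  note Hs = H[unfolded hom_dendriform_axioms_def]
  note h1 = Hs[THEN conjunct1] and h2 = Hs[THEN conjunct2, THEN conjunct1]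
    and h3 = Hs[THEN conjunct2, THEN conjunct2, THEN conjunct1]
    and h4 = Hs[THEN conjunct2, THEN conjunct2, THEN conjunct2, THEN conjunct1]
    and h5 = Hs[THEN conjunct2, THEN conjunct2, THEN conjunct2, THEN conjunct2]
  note brp = bilin_rules[OF bp] and brs = bilin_rules[OF bs] and brm = bilin_rules[OF bm]
  have aadd: "\<forall>x y. \<alpha> (x + y) = \<alpha> x + \<alpha> y" by (rule lin_add[OF linA])
  note ar = additive_facts[OF aadd]
  have smap: "\<And>x. ser_map \<alpha> (dl x) = dl (\<alpha> x)"
    by (rule ext) (simp add: ser_map_def dl_def ar)
  have ddp: "\<And>x y. ser_prod prec (dl x) (dl y) = (\<lambda>n. prec n x y)"
    by (rule ser_prod_dd) (simp_all add: brp)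
  have dds: "\<And>x y. ser_prod succ (dl x) (dl y) = (\<lambda>n. succ n x y)"
    by (rule ser_prod_dd) (simp_all add: brs)
  have drp: "\<And>f w n. ser_prod prec f (dl w) n = (\<Sum>i\<le>n. prec i (f (n - i)) w)"
    by (rule ser_prod_dr) (simp add: brp)
  have drs: "\<And>f w n. ser_prod succ f (dl w) n = (\<Sum>i\<le>n. succ i (f (n - i)) w)"
    by (rule ser_prod_dr) (simp add: brs)
  have dlp: "\<And>g w n. ser_prod prec (dl w) g n = (\<Sum>i\<le>n. prec i w (g (n - i)))"
    by (rule ser_prod_dl) (simp add: brp)
  have dls: "\<And>g w n. ser_prod succ (dl w) g n = (\<Sum>i\<le>n. succ i w (g (n - i)))"
    by (rule ser_prod_dl) (simp add: brs)
  have mulp: "\<And>x y. \<alpha> (prec 1 x y) = prec 1 (\<alpha> x) (\<alpha> y)"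
  proof -
    fix x y
    have "ser_map \<alpha> (ser_prod prec (dl x) (dl y)) = ser_prod prec (ser_map \<alpha> (dl x)) (ser_map \<alpha> (dl y))"
      by (rule h1[rule_format])
    hence "ser_map \<alpha> (\<lambda>n. prec n x y) = (\<lambda>n. prec n (\<alpha> x) (\<alpha> y))" by (simp only: smap ddp)
    from fun_cong[OF this, of 1] show "?thesis x y" by (simp add: ser_map_def)
  qed
  have muls: "\<And>x y. \<alpha> (succ 1 x y) = succ 1 (\<alpha> x) (\<alpha> y)"
  proof -
    fix x y
    have "ser_map \<alpha> (ser_prod succ (dl x) (dl y)) = ser_prod succ (ser_map \<alpha> (dl x)) (ser_map \<alpha> (dl y))"
      by (rule h2[rule_format])
    hence "ser_map \<alpha> (\<lambda>n. succ n x y) = (\<lambda>n. succ n (\<alpha> x) (\<alpha> y))" by (simp only: smap dds)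
    from fun_cong[OF this, of 1] show "?thesis x y" by (simp add: ser_map_def)
  qed
  define D1 where "D1 n x y z = (\<Sum>i\<le>n. prec i (prec (n - i) x y) (\<alpha> z)) -
      (\<Sum>i\<le>n. prec i (\<alpha> x) (prec (n - i) y z + succ (n - i) y z))" for n x y z
  define D2 where "D2 n x y z = (\<Sum>i\<le>n. prec i (succ (n - i) x y) (\<alpha> z)) -
      (\<Sum>i\<le>n. succ i (\<alpha> x) (prec (n - i) y z))" for n x y z
  define D3 where "D3 n x y z = (\<Sum>i\<le>n. succ i (\<alpha> x) (succ (n - i) y z)) -
      (\<Sum>i\<le>n. succ i (prec (n - i) x y + succ (n - i) x y) (\<alpha> z))" for n x y z
  have D1: "D1 n x y z = 0" for n x y z
  proof -
    have "ser_prod prec (ser_prod prec (dl x) (dl y)) (ser_map \<alpha> (dl z)) =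
      ser_prod prec (ser_map \<alpha> (dl x)) (\<lambda>n. ser_prod prec (dl y) (dl z) n + ser_prod succ (dl y) (dl z) n)"
      by (rule h3[rule_format])
    from fun_cong[OF this, of n] show ?thesis
      unfolding D1_def smap ddp dds drp dlp by simp
  qed
  have D2: "D2 n x y z = 0" for n x y z
  proof -
    have "ser_prod prec (ser_prod succ (dl x) (dl y)) (ser_map \<alpha> (dl z)) =
      ser_prod succ (ser_map \<alpha> (dl x)) (ser_prod prec (dl y) (dl z))"
      by (rule h4[rule_format])
    from fun_cong[OF this, of n] show ?thesis
      unfolding D2_def smap ddp dds drp dls by simp
  qed
  have D3: "D3 n x y z = 0" for n x y z
  proof -
    have "ser_prod succ (ser_map \<alpha> (dl x)) (ser_prod succ (dl y) (dl z)) =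
      ser_prod succ (\<lambda>n. ser_prod prec (dl x) (dl y) n + ser_prod succ (dl x) (dl y) n) (ser_map \<alpha> (dl z))"
      by (rule h5[rule_format])
    from fun_cong[OF this, of n] show ?thesis
      unfolding D3_def smap ddp dds drs dls by simp
  qed
  note simps = sum1 sum2 brp brs brm p0 s0 P_def
  have G1: "P (P x y) (\<alpha> z) - P (\<alpha> x) (P y z) = P (P y x) (\<alpha> z) - P (\<alpha> y) (P x z)" for x y z
  proof -
    have "P (P x y) (\<alpha> z) - P (\<alpha> x) (P y z) - (P (P y x) (\<alpha> z) - P (\<alpha> y) (P x z)) =
      - D3 2 x y z - D2 2 x z y + D3 2 y x z + D2 2 y z x + D1 2 z x y - D1 2 z y x"
      unfolding D1_def D2_def D3_def by (simp add: simps)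
    thus ?thesis by (simp add: D1 D2 D3)
  qed
  have G2: "m (P x y - P y x) (\<alpha> z) = P (\<alpha> x) (m y z) - m (\<alpha> y) (P x z)" for x y z
  proof -
    have "m (P x y - P y x) (\<alpha> z) - (P (\<alpha> x) (m y z) - m (\<alpha> y) (P x z)) =
      - D3 1 x y z + D3 1 y x z + D2 1 y z x"
      unfolding D1_def D2_def D3_def by (simp add: simps)
    thus ?thesis by (simp add: D1 D2 D3)
  qed
  have G3: "P (m x y + m y x) (\<alpha> z) = m (\<alpha> x) (P y z) + m (\<alpha> y) (P x z)" for x y z
  proof -
    have "P (m x y + m y x) (\<alpha> z) - (m (\<alpha> x) (P y z) + m (\<alpha> y) (P x z)) =
      - D3 1 x y z - D2 1 x z y + D1 1 z x y"
      unfolding D1_def D2_def D3_def by (simp add: simps)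
    thus ?thesis by (simp add: D1 D2 D3)
  qed
  have bP: "bilin s P"
    unfolding bilin_def P_def
  proof (intro conjI allI)
    fix x
    have 1: "Vector_Spaces.linear s s (succ 1 x)" using bs[of 1] unfolding bilin_def by blast
    have 2: "Vector_Spaces.linear s s (\<lambda>y. prec 1 y x)" using bp[of 1] unfolding bilin_def by blast
    show "Vector_Spaces.linear s s (\<lambda>y. succ 1 x y - prec 1 y x)"
      using linear_diff_fun[OF assms(1) 1 2] .
  next
    fix y
    have 1: "Vector_Spaces.linear s s (\<lambda>x. succ 1 x y)" using bs[of 1] unfolding bilin_def by blast
    have 2: "Vector_Spaces.linear s s (prec 1 y)" using bp[of 1] unfolding bilin_def by blast
    show "Vector_Spaces.linear s s (\<lambda>x. succ 1 x y - prec 1 y x)"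
      using linear_diff_fun[OF assms(1) 1 2] .
  qed
  have mulP: "\<alpha> (P x y) = P (\<alpha> x) (\<alpha> y)" for x y
    unfolding P_def ar mulp muls ..
  have PL: "hom_pre_lie s P \<alpha>"
    unfolding hom_pre_lie_def
  proof (intro conjI allI)
    show "bilin s P" by (rule bP)
    show "Vector_Spaces.linear s s \<alpha>" by (rule linA)
    show "\<alpha> (P x y) = P (\<alpha> x) (\<alpha> y)" for x y by (rule mulP)
    show "P (P x y) (\<alpha> z) - P (\<alpha> x) (P y z) = P (P y x) (\<alpha> z) - P (\<alpha> y) (P x z)" for x y z by (rule G1)
  qed
  have "hom_pre_poisson s m P \<alpha>"
    unfolding hom_pre_poisson_def
  proof (intro conjI allI)
    show "hom_zinbiel s m \<alpha>" by (rule Z)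
    show "hom_pre_lie s P \<alpha>" by (rule PL)
    show "m (P x y - P y x) (\<alpha> z) = P (\<alpha> x) (m y z) - m (\<alpha> y) (P x z)" for x y z by (rule G2)
    show "P (m x y + m y x) (\<alpha> z) = m (\<alpha> x) (P y z) + m (\<alpha> y) (P x z)" for x y z by (rule G3)
  qed
  thus ?thesis by (simp only: P_def)
qed

end
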